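(* Let $\mathcal{D}$ be a $p$-unipotent differential operator and let $k$ be a finite field of characteristic $p$ such that $\mathcal{D}_p$ has coefficients in $k(z)$. If $\ker(k(z),\mathcal{D}_p)\neq0$, then $\dim_{k(z^p)}\ker(k(z),\mathcal{D}_p)=1$.
   Context: $\ker(k(z),\mathcal{D}_p)$ is the set of solutions of $\mathcal{D}_p$ in $k(z)$; it is a $k(z^p)$-vector space. $\delta=z\,d/dz$. $\mathbb{C}_p$ is the completion of an algebraic closure of $\mathbb{Q}_p$; $E_p$ is the completion of $\mathbb{C}_p(z)$ for the Gauss norm; $\vartheta_{E_p}$ its ring of elements of norm $\le1$ with maximal ideal $\mathfrak{m}_p$; $\vartheta_{E_p}/\mathfrak{m}_p$ is identified with a subfield of $\overline{\mathbb{F}_p}(z)$, and for an operator $\mathcal{D}$ with coefficients in $\vartheta_{E_p}$, $\mathcal{D}_p$ is the reduction of its coefficients modulo $\mathfrak{m}_p$. MOM at zero (over any field $K$): for monic $L=\frac{d^n}{dz^n}+a_1\frac{d^{n-1}}{dz^{n-1}}+\dots+a_n\in K(z)[d/dz]$, $\alpha\in\overline K$ is singular if a pole of some $a_i$, regular singular if moreover each $(z-\alpha)^ia_i$ has no pole at $\alpha$; $\infty$ is regular singular if $0$ is regular singular after $z\mapsto1/z$; $L$ is Fuchsian if $\infty$ and all finite singular points are regular singular; writing $z^nL=\delta^n+b_1\delta^{n-1}+\dots+b_n$, the exponents at $0$ are the roots of $x^n+b_1(0)x^{n-1}+\dots+b_n(0)$; $L$ is MOM at zero if Fuchsian, $0$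 regular singular and all exponents at $0$ zero. An operator with coefficients in $E_p$ is $p$-unipotent if its coefficients lie in $\vartheta_{E_p}$ and its reduction modulo $\mathfrak{m}_p$ is nonzero and MOM at zero. *)

theory Defs
  imports "HOL-Computational_Algebra.Computational_Algebra"
begin

type_synonym 'k ratfun = "'k poly fract"

definition rrep :: "'k::field ratfun \<Rightarrow> 'k poly \<times> 'k poly" where
  "rrep f = (SOME (a, b). b \<noteq> 0 \<and> lead_coeff b = 1 \<and> coprime a b \<and> f = Fract a b)"

definition rnum :: "'k::field ratfun \<Rightarrow> 'k poly" where
  "rnum f = fst (rrep f)"

definition rden :: "'k::field ratfun \<Rightarrow> 'k poly" where
  "rden f = snd (rrep f)"

definition rderiv :: "'k::field ratfun \<Rightarrow> 'k ratfun" where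
  "rderiv f = Fract (pderiv (rnum f) * rden f - rnum f * pderiv (rden f)) (rden f * rden f)"

text \<open>A differential operator L = sum_{i<=n} c i (d/dz)^i in k(z)[d/dz];
  it is given by its order n and coefficient function c (only c 0..c n matter).\<close>
definition apply_op :: "nat \<Rightarrow> (nat \<Rightarrow> 'k::field ratfun) \<Rightarrow> 'k ratfun \<Rightarrow> 'k ratfun" where
  "apply_op n c f = (\<Sum>i\<le>n. c i * (rderiv ^^ i) f)"

text \<open>Coefficients of the monic normalisation d^n/dz^n + a_1 d^{n-1}/dz^{n-1} + ... + a_n.\<close>
definition monic_coeff :: "nat \<Rightarrow> (nat \<Rightarrow> 'k::field ratfun) \<Rightarrow> nat \<Rightarrow> 'k ratfun" where
  "monic_coeff n c j = c (n - j) / c n"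

definition rz :: "'k::field ratfun" where
  "rz = Fract [:0, 1:] 1"

definition reval0 :: "'k::field ratfun \<Rightarrow> 'k" where
  "reval0 f = poly (rnum f) 0 / poly (rden f) 0"

text \<open>Finite singular points are regular singular.  For a finite field k every
  irreducible polynomial q is separable, so for every root alpha of q in the
  algebraic closure the pole order of a at alpha equals the largest e with q^e dividing
  the (reduced) denominator of a.  Hence "(z-alpha)^j a_j has no pole at alpha for
  every alpha" is: multiplicity q (den a_j) <= j for every irreducible q.\<close>
definition finite_points_regular :: "nat \<Rightarrow> (nat \<Rightarrow> 'k::field ratfun) \<Rightarrow> bool" where
  "finite_points_regular n c \<longleftrightarrow>
     (\<forall>j\<in>{1..n}. \<forall>q::'k poly. irreducible q \<longrightarrow> \<not> q ^ (Suc j) dvd rden (monic_coeff n c j))"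

text \<open>Infinity is regular singular: after z = 1/w, this is the condition that
  a_j = O(z^{-j}) at infinity, i.e. deg(num a_j) + j <= deg(den a_j) whenever a_j is nonzero.\<close>
definition infinity_regular :: "nat \<Rightarrow> (nat \<Rightarrow> 'k::field ratfun) \<Rightarrow> bool" where
  "infinity_regular n c \<longleftrightarrow>
     (\<forall>j\<in>{1..n}. monic_coeff n c j \<noteq> 0 \<longrightarrow>
        degree (rnum (monic_coeff n c j)) + j \<le> degree (rden (monic_coeff n c j)))"

definition fuchsian :: "nat \<Rightarrow> (nat \<Rightarrow> 'k::field ratfun) \<Rightarrow> bool" where
  "fuchsian n c \<longleftrightarrow> finite_points_regular n c \<and> infinity_regular n c"

definition falling_poly :: "nat \<Rightarrow> 'k::field poly" where
  "falling_poly m = (\<Prod>k<m. [:- of_nat k, 1:])"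

text \<open>Indicial polynomial at 0: since z^m (d/dz)^m = delta(delta-1)...(delta-m+1),
  z^n L = sum_j (z^j a_j) z^(n-j) (d/dz)^(n-j) = delta^n + b_1 delta^(n-1) + ... + b_n,
  and x^n + b_1(0) x^(n-1) + ... + b_n(0) = sum_j (z^j a_j)(0) * x(x-1)...(x-n+j+1), a_0 = 1.\<close>
definition indicial_poly :: "nat \<Rightarrow> (nat \<Rightarrow> 'k::field ratfun) \<Rightarrow> 'k poly" where
  "indicial_poly n c =
     (\<Sum>j\<le>n. smult (reval0 (rz ^ j * monic_coeff n c j)) (falling_poly (n - j)))"

text \<open>MOM at zero: Fuchsian (which includes 0 being regular singular) and all
  exponents at 0 are zero; for the monic degree-n indicial polynomial, having 0 as
  its only root in an algebraic closure means it equals x^n.\<close>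
definition MOM_at_zero :: "nat \<Rightarrow> (nat \<Rightarrow> 'k::field ratfun) \<Rightarrow> bool" where
  "MOM_at_zero n c \<longleftrightarrow> fuchsian n c \<and> indicial_poly n c = [:0, 1:] ^ n"

definition sol_space :: "nat \<Rightarrow> (nat \<Rightarrow> 'k::field ratfun) \<Rightarrow> 'k ratfun set" where
  "sol_space n c = {f. apply_op n c f = 0}"

definition subfield_zp :: "nat \<Rightarrow> 'k::field ratfun set" where
  "subfield_zp p = {Fract (a \<circ>\<^sub>p monom 1 p) (b \<circ>\<^sub>p monom 1 p) | a b. True}"

definition dim_one_over :: "'k::field ratfun set \<Rightarrow> 'k ratfun set \<Rightarrow> bool" where
  "dim_one_over K V \<longleftrightarrow> (\<exists>f\<in>V. f \<noteq> 0 \<and> (\<forall>g\<in>V. \<exists>a\<in>K. g = a * f))"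

end

theory Submission
  imports Defs
begin


lemma rrep_exists:
  fixes f :: "'k::field ratfun"
  shows "\<exists>a b. b \<noteq> 0 \<and> lead_coeff b = 1 \<and> coprime a b \<and> f = Fract a b"
proof -
  define P where "P = (\<lambda>m. \<exists>a b. b \<noteq> 0 \<and> f = Fract a b \<and> degree b = m)"
  obtain a0 b0 where "f = Fract a0 b0" "b0 \<noteq> 0" by (cases f)
  hence "P (degree b0)" unfolding P_def by blast
  hence "P (LEAST m. P m)" by (rule LeastI)
  then obtain a b where b: "b \<noteq> 0" and fab: "f = Fract a b" and db: "degree b = (LEAST m. P m)"
    unfolding P_def by blast
  have cop: "coprime a b"
  proof (rule coprimeI)
    fix c assume ca: "c dvd a" and cb: "c dvd b"
    from ca obtain a' where a': "a = c * a'" by (auto elim: dvdE)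
    from cb obtain b' where b': "b = c * b'" by (auto elim: dvdE)
    have c0: "c \<noteq> 0" and b'0: "b' \<noteq> 0" using b b' by auto
    have "f = Fract a' b'" using fab a' b' c0 by (simp add: mult_fract_cancel)
    hence "P (degree b')" unfolding P_def using b'0 by blast
    hence "(LEAST m. P m) \<le> degree b'" by (rule Least_le)
    moreover have "degree b = degree c + degree b'" using b' c0 b'0 by (simp add: degree_mult_eq)
    ultimately have "degree c = 0" using db by simp
    thus "is_unit c" using c0 by (simp add: is_unit_iff_degree)
  qed
  define l where "l = lead_coeff b"
  have l0: "l \<noteq> 0" using b by (simp add: l_def)
  have cop2: "coprime (smult (inverse l) a) (smult (inverse l) b)"
  proof (rule coprimeI)
    fix c assume c1: "c dvd smult (inverse l) a" and c2: "c dvd smult (inverse l) b"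
    have "c dvd a" using dvd_smult[OF c1, of l] l0 by simp
    moreover have "c dvd b" using dvd_smult[OF c2, of l] l0 by simp
    ultimately show "is_unit c" using cop coprime_common_divisor by blast
  qed
  have "f = Fract (smult (inverse l) a) (smult (inverse l) b)" using fab l0
    using mult_fract_cancel[of "[:inverse l:]" a b] l0 by simp
  moreover have "lead_coeff (smult (inverse l) b) = 1" using l0 by (simp add: l_def)
  moreover have "smult (inverse l) b \<noteq> 0" using l0 b by simp
  ultimately show ?thesis using cop2 by blast
qed

lemma rrep_spec:
  fixes f :: "'k::field ratfun"
  shows "rden f \<noteq> 0 \<and> lead_coeff (rden f) = 1 \<and> coprime (rnum f) (rden f) \<and> f = Fract (rnum f) (rden f)"
proof -
  from rrep_exists[of f] obtain a b where "b \<noteq> 0 \<and> lead_coeff b = 1 \<and> coprime a b \<and> f = Fract a b" by blast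
  hence "\<exists>x. (case x of (a, b) \<Rightarrow> b \<noteq> 0 \<and> lead_coeff b = 1 \<and> coprime a b \<and> f = Fract a b)"
    by (intro exI[of _ "(a,b)"]) auto
  from someI_ex[OF this] show ?thesis unfolding rnum_def rden_def rrep_def
    by (auto simp: case_prod_unfold)
qed

lemma rderiv_Fract:
  fixes a b :: "'k::field poly"
  assumes b: "b \<noteq> 0"
  shows "rderiv (Fract a b) = Fract (pderiv a * b - a * pderiv b) (b * b)"
proof -
  define n d where "n = rnum (Fract a b)" and "d = rden (Fract a b)"
  have d0: "d \<noteq> 0" and e: "Fract a b = Fract n d" using rrep_spec[of "Fract a b"] by (auto simp: n_def d_def)
  have E: "a * d = n * b" using e b d0 by (simp add: eq_fract)
  have "pderiv (a * d) = pderiv (n * b)" using E by simp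
  hence E2: "a * pderiv d + d * pderiv a = n * pderiv b + b * pderiv n" by (simp add: pderiv_mult)
  have "(pderiv n * d - n * pderiv d) * (b * b) = (pderiv a * b - a * pderiv b) * (d * d)"
  proof -
    have "(pderiv a * b - a * pderiv b) * (d * d) = (d * pderiv a) * b * d - (a * d) * pderiv b * d"
      by (simp add: algebra_simps)
    also have "\<dots> = (n * pderiv b + b * pderiv n - a * pderiv d) * b * d - (n * b) * pderiv b * d"
      using E E2 by (metis add_diff_cancel_left')
    also have "\<dots> = pderiv n * b * b * d - (a * d) * pderiv d * b"
      by (simp add: algebra_simps)
    also have "\<dots> = (pderiv n * d - n * pderiv d) * (b * b)"
      using E by (simp add: algebra_simps)
    finally show ?thesis by simp
  qed
  thus ?thesis unfolding rderiv_def n_def[symmetric] d_def[symmetric] using b d0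
    by (simp add: eq_fract)
qed

lemma Fract_add1: "Fract (x + y) 1 = Fract x 1 + (Fract y 1 :: 'a::idom fract)"
  by simp
lemma Fract_mult1: "Fract (x * y) 1 = Fract x 1 * (Fract y 1 :: 'a::idom fract)"
  by simp
lemma Fract_diff1: "Fract (x - y) 1 = Fract x 1 - (Fract y 1 :: 'a::idom fract)"
  by simp
lemma Fract_minus1: "Fract (- x) 1 = - (Fract x 1 :: 'a::idom fract)"
  by simp
lemma Fract_div1: "b \<noteq> 0 \<Longrightarrow> Fract a b = Fract a 1 / (Fract b 1 :: 'a::idom fract)"
  by (simp add: divide_fract_def)
lemma Fract1_nz: "b \<noteq> 0 \<Longrightarrow> Fract b 1 \<noteq> (0 :: 'a::idom fract)"
proof
  assume b: "b \<noteq> 0" and "Fract b 1 = 0"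
  hence "Fract b 1 = Fract 0 (1::'a)" by (simp add: fract_collapse)
  hence "b * 1 = 0 * 1" by (subst (asm) eq_fract(1)) auto
  thus False using b by simp
qed

lemma rderiv_Fract':
  fixes a b :: "'k::field poly"
  assumes b: "b \<noteq> 0"
  shows "rderiv (Fract a b) = (Fract (pderiv a) 1 * Fract b 1 - Fract a 1 * Fract (pderiv b) 1) / (Fract b 1 * Fract b 1)"
  using b by (simp add: rderiv_Fract divide_fract_def)

lemma field_add_id:
  fixes A A' B B' C C' D D' :: "'a::field"
  assumes "B \<noteq> 0" "D \<noteq> 0"
  shows "((A'*D + A*D' + (C'*B + C*B'))*(B*D) - (A*D + C*B)*(B'*D + B*D'))/((B*D)*(B*D))
     = (A'*B - A*B')/(B*B) + (C'*D - C*D')/(D*D)"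
  using assms by (simp add: field_simps)

lemma field_mult_id:
  fixes A A' B B' C C' D D' :: "'a::field"
  assumes "B \<noteq> 0" "D \<noteq> 0"
  shows "((A'*C + A*C')*(B*D) - (A*C)*(B'*D + B*D'))/((B*D)*(B*D))
     = (A'*B - A*B')/(B*B) * (C/D) + (A/B) * ((C'*D - C*D')/(D*D))"
  using assms by (simp add: field_simps)

lemma rderiv_add: "rderiv (x + y) = rderiv x + rderiv (y :: 'k::field ratfun)"
proof -
  obtain a b where x: "x = Fract a b" "b \<noteq> 0" by (cases x)
  obtain c d where y: "y = Fract c d" "d \<noteq> 0" by (cases y)
  have s: "x + y = Fract (a * d + c * b) (b * d)" using x y by simp
  have bd: "b * d \<noteq> 0" using x y by simp
  have "rderiv (x + y) = (Fract (pderiv (a * d + c * b)) 1 * Fract (b * d) 1 - Fract (a * d + c * b) 1 * Fract (pderiv (b * d)) 1) / (Fract (b * d) 1 * Fract (b * d) 1)"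
    unfolding s by (rule rderiv_Fract'[OF bd])
  also have "\<dots> = ((Fract (pderiv a) 1*Fract d 1 + Fract a 1*Fract (pderiv d) 1 + (Fract (pderiv c) 1*Fract b 1 + Fract c 1*Fract (pderiv b) 1))*(Fract b 1*Fract d 1) - (Fract a 1*Fract d 1 + Fract c 1*Fract b 1)*(Fract (pderiv b) 1*Fract d 1 + Fract b 1*Fract (pderiv d) 1))/((Fract b 1*Fract d 1)*(Fract b 1*Fract d 1))"
    by (simp only: pderiv_add pderiv_mult Fract_add1 Fract_mult1 ac_simps)
  also have "\<dots> = rderiv x + rderiv y"
    unfolding x(1) y(1) rderiv_Fract'[OF x(2)] rderiv_Fract'[OF y(2)]
    by (rule field_add_id[OF Fract1_nz[OF x(2)] Fract1_nz[OF y(2)]])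
  finally show ?thesis .
qed

lemma rderiv_mult: "rderiv (x * y) = rderiv x * y + x * rderiv (y :: 'k::field ratfun)"
proof -
  obtain a b where x: "x = Fract a b" "b \<noteq> 0" by (cases x)
  obtain c d where y: "y = Fract c d" "d \<noteq> 0" by (cases y)
  have s: "x * y = Fract (a * c) (b * d)" using x y by simp
  have bd: "b * d \<noteq> 0" using x y by simp
  have "rderiv (x * y) = (Fract (pderiv (a * c)) 1 * Fract (b * d) 1 - Fract (a * c) 1 * Fract (pderiv (b * d)) 1) / (Fract (b * d) 1 * Fract (b * d) 1)"
    unfolding s by (rule rderiv_Fract'[OF bd])
  also have "\<dots> = ((Fract (pderiv a) 1*Fract c 1 + Fract a 1*Fract (pderiv c) 1)*(Fract b 1*Fract d 1) - (Fract a 1*Fract c 1)*(Fract (pderiv b) 1*Fract d 1 + Fract b 1*Fract (pderiv d) 1))/((Fract b 1*Fract d 1)*(Fract b 1*Fract d 1))"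
    by (simp only: pderiv_add pderiv_mult Fract_add1 Fract_mult1 ac_simps)
  also have "\<dots> = rderiv x * y + x * rderiv y"
    unfolding x(1) y(1) rderiv_Fract'[OF x(2)] rderiv_Fract'[OF y(2)]
    unfolding Fract_div1[OF x(2)] Fract_div1[OF y(2)]
    by (rule field_mult_id[OF Fract1_nz[OF x(2)] Fract1_nz[OF y(2)]])
  finally show ?thesis .
qed

lemma rderiv_minus: "rderiv (- x) = - rderiv (x :: 'k::field ratfun)"
proof -
  obtain a b where x: "x = Fract a b" "b \<noteq> 0" by (cases x)
  show ?thesis using x by (simp add: rderiv_Fract pderiv_minus)
qed

lemma rderiv_diff: "rderiv (x - y) = rderiv x - rderiv (y :: 'k::field ratfun)"
  using rderiv_add[of x "-y"] rderiv_minus[of y] by simp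

lemma rderiv_poly: "rderiv (Fract q 1 :: 'k::field ratfun) = Fract (pderiv q) 1"
  by (simp add: rderiv_Fract)

lemma rderiv_rz: "rderiv (rz :: 'k::field ratfun) = 1"
proof -
  have "pderiv [:0, 1:] = (1 :: 'k poly)" by (simp add: pderiv_pCons pCons_one)
  thus ?thesis by (simp add: rz_def rderiv_poly fract_collapse)
qed

lemma rderiv_one: "rderiv (1 :: 'k::field ratfun) = 0"
  using rderiv_poly[of "1::'k poly"] by (simp add: fract_collapse)

lemma rderiv_rz_power: "rz * rderiv (rz ^ k :: 'k::field ratfun) = of_nat k * rz ^ k"
proof (induction k)
  case 0
  then show ?case by (simp add: rderiv_one)
next
  case (Suc k)
  have "rz * rderiv (rz ^ Suc k :: 'k ratfun) = rz * (rderiv rz * rz ^ k + rz * rderiv (rz ^ k))"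
    by (simp add: rderiv_mult)
  also have "\<dots> = rz * rz ^ k + rz * (rz * rderiv (rz ^ k))" by (simp add: rderiv_rz algebra_simps)
  also have "\<dots> = of_nat (Suc k) * rz ^ Suc k" using Suc by (simp add: algebra_simps)
  finally show ?case .
qed



definition inR :: "'k::field ratfun \<Rightarrow> bool" where
  "inR x \<longleftrightarrow> (\<exists>a b. poly b 0 \<noteq> 0 \<and> x = Fract a b)"

lemma reval0_Fract:
  fixes a b :: "'k::field poly"
  assumes b: "poly b 0 \<noteq> 0"
  shows "reval0 (Fract a b) = poly a 0 / poly b 0"
proof -
  define n d where "n = rnum (Fract a b)" and "d = rden (Fract a b)"
  have d0: "d \<noteq> 0" and e: "Fract a b = Fract n d" and cop: "coprime n d"
    using rrep_spec[of "Fract a b"] by (auto simp: n_def d_def)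
  have b0: "b \<noteq> 0" using b by auto
  have E: "a * d = n * b" using e b0 d0 by (simp add: eq_fract)
  hence E0: "poly a 0 * poly d 0 = poly n 0 * poly b 0" by (metis poly_mult)
  have pd: "poly d 0 \<noteq> 0"
  proof
    assume "poly d 0 = 0"
    hence "poly n 0 = 0" using E0 b by simp
    hence "[:0,1:] dvd n" "[:0,1:] dvd d" using \<open>poly d 0 = 0\<close> by (simp_all add: poly_eq_0_iff_dvd)
    hence "is_unit ([:0,1:] :: 'k poly)" using cop coprime_common_divisor by blast
    thus False by (simp add: is_unit_iff_degree)
  qed
  show ?thesis unfolding reval0_def n_def[symmetric] d_def[symmetric] using E0 pd b
    by (simp add: field_simps)
qed

lemma inR_Fract: "poly b 0 \<noteq> 0 \<Longrightarrow> inR (Fract a b)"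
  unfolding inR_def by blast

lemma inR_add:
  assumes "inR x" "inR y"
  shows "inR (x + y) \<and> reval0 (x + y) = reval0 x + reval0 (y :: 'k::field ratfun)"
proof -
  obtain a b where x: "poly b 0 \<noteq> 0" "x = Fract a b" using assms(1) unfolding inR_def by blast
  obtain c d where y: "poly d 0 \<noteq> 0" "y = Fract c d" using assms(2) unfolding inR_def by blast
  have b0: "b \<noteq> 0" "d \<noteq> 0" using x y by auto
  have s: "x + y = Fract (a * d + c * b) (b * d)" using x y b0 by simp
  have p: "poly (b * d) 0 \<noteq> 0" using x y by simp
  show ?thesis unfolding s using p x y inR_Fract[OF p]
    by (auto simp: reval0_Fract add_divide_distrib)
qed

lemma inR_mult:
  assumes "inR x" "inR y"
  shows "inR (x * y) \<and> reval0 (x * y) = reval0 x * reval0 (y :: 'k::field ratfun)"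
proof -
  obtain a b where x: "poly b 0 \<noteq> 0" "x = Fract a b" using assms(1) unfolding inR_def by blast
  obtain c d where y: "poly d 0 \<noteq> 0" "y = Fract c d" using assms(2) unfolding inR_def by blast
  have s: "x * y = Fract (a * c) (b * d)" using x y by simp
  have p: "poly (b * d) 0 \<noteq> 0" using x y by simp
  show ?thesis unfolding s using p x y inR_Fract[OF p]
    by (auto simp: reval0_Fract)
qed

lemma inR_poly: "inR (Fract q 1 :: 'k::field ratfun) \<and> reval0 (Fract q 1 :: 'k::field ratfun) = poly q 0"
  using reval0_Fract[of 1 q] inR_Fract[of 1 q] by auto

lemma inR_one: "inR (1 :: 'k::field ratfun) \<and> reval0 (1 :: 'k::field ratfun) = 1"
  using inR_poly[of 1] by (simp add: fract_collapse)

lemma inR_rz: "inR (rz :: 'k::field ratfun) \<and> reval0 (rz :: 'k::field ratfun) = 0"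
  using inR_poly[of "[:0,1:]"] by (simp add: rz_def)

lemma inR_of_nat: "inR (of_nat m :: 'k::field ratfun) \<and> reval0 (of_nat m :: 'k::field ratfun) = of_nat m"
proof -
  have e: "(of_nat m :: 'k ratfun) = Fract (of_nat m) 1" by (rule of_nat_fract)
  have "poly (of_nat m :: 'k poly) 0 = of_nat m" by (simp add: of_nat_poly)
  thus ?thesis unfolding e using inR_poly[of "of_nat m"] by simp
qed

lemma inR_minus:
  assumes "inR x"
  shows "inR (- x) \<and> reval0 (- x) = - reval0 (x :: 'k::field ratfun)"
proof -
  obtain a b where x: "poly b 0 \<noteq> 0" "x = Fract a b" using assms(1) unfolding inR_def by blast
  show ?thesis using x by (auto simp: inR_def reval0_Fract)
qed

lemma inR_diff: "inR x \<Longrightarrow> inR y \<Longrightarrow> inR (x - y) \<and> reval0 (x - y) = reval0 x - reval0 (y :: 'k::field ratfun)"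
  using inR_add[of x "- y"] inR_minus[of y] by simp

lemma inR_deriv:
  assumes "inR x"
  shows "inR (rderiv x)"
proof -
  obtain a b where x: "poly b 0 \<noteq> 0" "x = Fract a b" using assms(1) unfolding inR_def by blast
  hence "b \<noteq> 0" by auto
  hence "rderiv x = Fract (pderiv a * b - a * pderiv b) (b * b)" using x rderiv_Fract by simp
  thus ?thesis using x unfolding inR_def by (intro exI[of _ "pderiv a * b - a * pderiv b"] exI[of _ "b * b"]) simp
qed

lemma inR_sum: "(\<And>i. i \<in> S \<Longrightarrow> inR (g i)) \<Longrightarrow> inR (sum g S) \<and> reval0 (sum g S) = (\<Sum>i\<in>S. reval0 (g i :: 'k::field ratfun))"
proof (induction S rule: infinite_finite_induct)
  case (infinite A)
  then show ?case using inR_poly[of 0] by (simp add: fract_collapse)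
next
  case empty
  then show ?case using inR_poly[of 0] by (simp add: fract_collapse)
next
  case (insert x F)
  then show ?case using inR_add[of "g x" "sum g F"] by auto
qed

lemma deriv_expand:
  fixes F :: "'k::field ratfun"
  assumes "inR F"
  shows "\<exists>E. inR E \<and> reval0 E = (\<Prod>i<k. (of_nat m - of_nat i)) * reval0 F \<and>
            rz ^ k * (rderiv ^^ k) (rz ^ m * F) = rz ^ m * E"
proof (induction k)
  case 0
  then show ?case using assms by auto
next
  case (Suc k)
  then obtain E where E: "inR E" "reval0 E = (\<Prod>i<k. (of_nat m - of_nat i)) * reval0 F"
    "rz ^ k * (rderiv ^^ k) (rz ^ m * F) = rz ^ m * E" by blast
  define Y where "Y = (rderiv ^^ k) (rz ^ m * F)"
  define E' where "E' = (of_nat m - of_nat k) * E + rz * rderiv E"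
  have h1: "rz * rderiv (rz ^ k * Y) = (rz * rderiv (rz ^ k)) * Y + rz ^ Suc k * rderiv Y"
    unfolding rderiv_mult by (simp add: ring_distribs ac_simps)
  have h2: "rz * rderiv (rz ^ m * E) = (rz * rderiv (rz ^ m)) * E + rz ^ Suc m * rderiv E"
    unfolding rderiv_mult by (simp add: ring_distribs ac_simps)
  have h1': "rz * rderiv (rz ^ k * Y) = of_nat k * (rz ^ k * Y) + rz ^ Suc k * rderiv Y"
    using h1 unfolding rderiv_rz_power by (simp add: mult.assoc)
  have "rz ^ Suc k * rderiv Y = rz * rderiv (rz ^ k * Y) - of_nat k * (rz ^ k * Y)"
    using h1' by (metis add_diff_cancel_left')
  also have "\<dots> = rz * rderiv (rz ^ m * E) - of_nat k * (rz ^ m * E)"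
    using E(3) unfolding Y_def by simp
  also have "\<dots> = of_nat m * rz ^ m * E + rz ^ Suc m * rderiv E - of_nat k * (rz ^ m * E)"
    using h2 unfolding rderiv_rz_power by (simp add: mult.assoc)
  also have "\<dots> = rz ^ m * E'" unfolding E'_def by (simp add: algebra_simps)
  finally have "rz ^ Suc k * rderiv Y = rz ^ m * E'" .
  moreover have "inR E'" using E(1) inR_of_nat inR_diff inR_mult inR_add inR_rz inR_deriv
    unfolding E'_def by meson
  moreover have "reval0 E' = (\<Prod>i<Suc k. (of_nat m - of_nat i)) * reval0 F"
  proof -
    note d = inR_diff[OF conjunct1[OF inR_of_nat[of m]] conjunct1[OF inR_of_nat[of k]], where 'k='k]
    have i1: "inR (of_nat m - of_nat k :: 'k ratfun)" "reval0 (of_nat m - of_nat k :: 'k ratfun) = of_nat m - of_nat k"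
      using d by (simp_all only: conjunct2[OF inR_of_nat[of m]] conjunct2[OF inR_of_nat[of k]])
    have i2: "inR (rz * rderiv E)" "reval0 (rz * rderiv E) = 0"
      using inR_mult[OF conjunct1[OF inR_rz] inR_deriv[OF E(1)]] inR_rz by auto
    have "reval0 E' = (of_nat m - of_nat k) * reval0 E"
      unfolding E'_def using inR_add[OF conjunct1[OF inR_mult[OF i1(1) E(1)]] i2(1)]
        inR_mult[OF i1(1) E(1)] i1(2) i2(2) by simp
    thus ?thesis using E(2) by (simp add: algebra_simps)
  qed
  ultimately show ?case unfolding Y_def by (intro exI[of _ E']) simp
qed



lemma rz_power: "rz ^ j = (Fract ([:0,1:] ^ j) 1 :: 'k::field ratfun)"
  by (induction j) (simp_all add: rz_def fract_collapse)

lemma rz_nz: "(rz :: 'k::field ratfun) \<noteq> 0"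
  unfolding rz_def by (rule Fract1_nz) simp

lemma inR_reg:
  fixes a :: "'k::field ratfun"
  assumes nd: "\<not> [:0,1:] ^ Suc j dvd rden a"
  shows "inR (rz ^ j * a)"
proof -
  define d where "d = rden a"
  have d0: "d \<noteq> 0" and ea: "a = Fract (rnum a) d" using rrep_spec[of a] by (auto simp: d_def)
  obtain w where w: "d = [:0,1:] ^ order 0 d * w" "\<not> [:0,1:] dvd w"
    using order_decomp[OF d0, of 0] by auto
  define e where "e = order 0 d"
  have oj: "e \<le> j"
  proof (rule ccontr)
    assume "\<not> e \<le> j"
    hence "[:0,1:] ^ Suc j dvd ([:0,1:] :: 'k poly) ^ e" by (intro le_imp_power_dvd) simp
    hence "[:0,1:] ^ Suc j dvd d" using w(1) unfolding e_def by (metis dvd_mult2)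
    thus False using nd unfolding d_def by simp
  qed
  have pw: "poly w 0 \<noteq> 0" using w(2) poly_eq_0_iff_dvd[of w 0] by simp
  have w0: "w \<noteq> 0" using pw by auto
  have "rz ^ j * a = Fract ([:0,1:] ^ j * rnum a) ([:0,1:] ^ e * w)"
    using ea w(1) unfolding rz_power e_def by (metis mult_fract mult_1)
  also have "\<dots> = Fract ([:0,1:] ^ (j - e) * rnum a) w"
  proof -
    have "([:0,1:] :: 'k poly) ^ j = [:0,1:] ^ (j - e) * [:0,1:] ^ e"
      using oj by (simp add: power_add[symmetric])
    thus ?thesis using w0 by (simp add: eq_fract)
  qed
  finally show ?thesis using pw by (simp add: inR_Fract)
qed

lemma key:
  fixes c :: "nat \<Rightarrow> 'k::field ratfun"
  assumes cn: "c n \<noteq> 0" and mom: "MOM_at_zero n c" and sol: "apply_op n c f = 0"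
    and f: "f = rz ^ m * F" "inR F" "reval0 F \<noteq> 0"
  shows "(of_nat m :: 'k) = 0"
proof -
  define A where "A j = rz ^ j * monic_coeff n c j" for j
  have A_R: "inR (A j)" if "j \<le> n" for j
  proof (cases "j = 0")
    case True
    then show ?thesis using cn conjunct1[OF inR_one[where 'k='k]] by (simp add: A_def monic_coeff_def)
  next
    case False
    have "irreducible ([:0,1:] :: 'k poly)" by (rule irreducible_linear_field_poly) simp
    moreover have "\<forall>j\<in>{1..n}. \<forall>q::'k poly. irreducible q \<longrightarrow> \<not> q ^ (Suc j) dvd rden (monic_coeff n c j)"
      using mom unfolding MOM_at_zero_def fuchsian_def finite_points_regular_def by blast
    moreover have "j \<in> {1..n}" using False that by simp
    ultimately have "\<not> [:0,1:] ^ Suc j dvd rden (monic_coeff n c j)" by blast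
    thus ?thesis unfolding A_def by (rule inR_reg)
  qed
  have "\<forall>k. \<exists>E. inR E \<and> reval0 E = (\<Prod>i<k. (of_nat m - of_nat i)) * reval0 F \<and>
            rz ^ k * (rderiv ^^ k) f = rz ^ m * E"
    using deriv_expand[OF f(2)] f(1) by blast
  then obtain E where E: "\<And>k. inR (E k)" "\<And>k. reval0 (E k) = (\<Prod>i<k. (of_nat m - of_nat i)) * reval0 F"
    "\<And>k. rz ^ k * (rderiv ^^ k) f = rz ^ m * E k"
    by metis
  have "0 = rz ^ n * (apply_op n c f / c n)" using sol by simp
  also have "\<dots> = (\<Sum>i\<le>n. (c i / c n) * (rz ^ n * (rderiv ^^ i) f))"
    unfolding apply_op_def by (simp add: sum_divide_distrib sum_distrib_left ac_simps)
  also have "\<dots> = (\<Sum>j\<le>n. (c (n - j) / c n) * (rz ^ n * (rderiv ^^ (n - j)) f))"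
    unfolding atMost_atLeast0 by (subst sum.atLeastAtMost_rev) simp
  also have "\<dots> = (\<Sum>j\<le>n. rz ^ m * (A j * E (n - j)))"
  proof (rule sum.cong)
    fix j assume "j \<in> {..n}"
    hence jn: "j \<le> n" by simp
    have "(rz :: 'k ratfun) ^ n = rz ^ j * rz ^ (n - j)" using jn by (simp add: power_add[symmetric])
    hence "(c (n - j) / c n) * (rz ^ n * (rderiv ^^ (n - j)) f)
        = A j * (rz ^ (n - j) * (rderiv ^^ (n - j)) f)"
      unfolding A_def monic_coeff_def by (simp add: ac_simps)
    also have "\<dots> = rz ^ m * (A j * E (n - j))" using E(3)[of "n - j"] by (simp add: ac_simps)
    finally show "(c (n - j) / c n) * (rz ^ n * (rderiv ^^ (n - j)) f) = rz ^ m * (A j * E (n - j))" .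
  qed simp
  also have "\<dots> = rz ^ m * (\<Sum>j\<le>n. A j * E (n - j))" by (simp add: sum_distrib_left)
  finally have "(\<Sum>j\<le>n. A j * E (n - j)) = 0" using rz_nz[where 'k='k] by simp
  hence "0 = reval0 (\<Sum>j\<le>n. A j * E (n - j))" using inR_poly[of "0::'k poly"] by (simp add: fract_collapse)
  also have "\<dots> = (\<Sum>j\<le>n. reval0 (A j) * reval0 (E (n - j)))"
    using inR_sum[of "{..n}" "\<lambda>j. A j * E (n - j)"] inR_mult[OF A_R E(1)] by auto
  also have "\<dots> = (\<Sum>j\<le>n. reval0 (A j) * (\<Prod>i<n - j. (of_nat m - of_nat i))) * reval0 F"
    unfolding E(2) sum_distrib_right by (simp add: ac_simps)
  also have "(\<Sum>j\<le>n. reval0 (A j) * (\<Prod>i<n - j. (of_nat m - of_nat i))) = poly (indicial_poly n c) (of_nat m)"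
    unfolding indicial_poly_def poly_sum falling_poly_def A_def by (simp add: poly_prod)
  also have "\<dots> = of_nat m ^ n" using mom unfolding MOM_at_zero_def by simp
  finally have "of_nat m ^ n * reval0 F = (0::'k)" by simp
  thus ?thesis using f(3) by simp
qed



lemma Z_power: "([:0,1:] :: 'a::comm_ring_1 poly) ^ n = monom 1 n"
  by (simp add: monom_altdef)

lemma rderiv_iter_mult:
  assumes "rderiv s = 0"
  shows "(rderiv ^^ i) (s * f) = s * (rderiv ^^ i) (f :: 'k::field ratfun)"
  by (induction i) (simp_all add: rderiv_mult assms)

lemma rderiv_iter_diff:
  "(rderiv ^^ i) (f - g) = (rderiv ^^ i) f - (rderiv ^^ i) (g :: 'k::field ratfun)"
  by (induction i) (simp_all add: rderiv_diff)

lemma sol_mult: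
  assumes "rderiv s = 0" "apply_op n c f = 0"
  shows "apply_op n c (s * f) = (0 :: 'k::field ratfun)"
proof -
  have "apply_op n c (s * f) = s * apply_op n c f"
    unfolding apply_op_def rderiv_iter_mult[OF assms(1)] by (simp add: sum_distrib_left ac_simps)
  thus ?thesis using assms by simp
qed

lemma sol_diff:
  assumes "apply_op n c f = 0" "apply_op n c g = 0"
  shows "apply_op n c (f - g) = (0 :: 'k::field ratfun)"
proof -
  have "apply_op n c (f - g) = apply_op n c f - apply_op n c g"
    unfolding apply_op_def rderiv_iter_diff by (simp add: sum_subtractf algebra_simps)
  thus ?thesis using assms by simp
qed

lemma rderiv_const0: "pderiv q = 0 \<Longrightarrow> rderiv (Fract q 1 :: 'k::field ratfun) = 0"
  by (simp add: rderiv_poly fract_collapse)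

lemma pderiv_pcompose_char:
  assumes "of_nat p = (0::'k::field)"
  shows "pderiv (pcompose Q (monom 1 p) :: 'k poly) = 0"
  using assms by (simp add: pderiv_pcompose pderiv_monom)

lemma coeff_pcompose_monom_gen:
  assumes p: "p > 0"
  shows "coeff (pcompose Q (monom (1::'a::comm_ring_1) p)) j = (if p dvd j then coeff Q (j div p) else 0)"
proof (induction Q arbitrary: j rule: pCons_induct)
  case 0
  then show ?case by simp
next
  case (pCons a Q)
  have e: "coeff (pcompose (pCons a Q) (monom 1 p)) j
        = (if j = 0 then a else 0) + (if j < p then 0 else coeff (pcompose Q (monom 1 p)) (j - p))"
    by (cases j) (auto simp: pcompose_pCons coeff_monom_mult)
  show ?case
  proof (cases "j < p")
    case True
    then show ?thesis using e p by (cases "j = 0") (auto dest: dvd_imp_le)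
  next
    case False
    hence jp: "j \<ge> p" "j \<noteq> 0" using p by auto
    have d: "p dvd j \<longleftrightarrow> p dvd (j - p)" using jp by (simp add: dvd_diff_nat dvd_minus_self)
    have q: "p dvd j \<Longrightarrow> j div p = Suc ((j - p) div p)" using jp p
      by (simp add: le_div_geq)
    show ?thesis using e pCons.IH[of "j - p"] jp d q by auto
  qed
qed

definition spoly :: "nat \<Rightarrow> 'a::zero poly \<Rightarrow> 'a poly" where
  "spoly p X = Poly (map (\<lambda>i. coeff X (i * p)) [0..<Suc (degree X)])"

lemma coeff_spoly:
  assumes "p > 0"
  shows "coeff (spoly p X) i = coeff X (i * p)"
proof (cases "i \<le> degree X")
  case True
  then show ?thesis by (simp add: spoly_def nth_default_def del: upt_Suc)
next
  case False
  have "i \<le> i * p" using assms by simp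
  hence "i * p > degree X" using False by linarith
  then show ?thesis using False by (simp add: spoly_def nth_default_def coeff_eq_0)
qed

lemma coeff_spoly_comp:
  assumes "p > 0"
  shows "coeff (pcompose (spoly p X) (monom (1::'a::comm_ring_1) p)) j = (if p dvd j then coeff X j else 0)"
  using assms by (simp add: coeff_pcompose_monom_gen coeff_spoly)

lemma spoly_eq:
  assumes "p > 0" "\<And>j. \<not> p dvd j \<Longrightarrow> coeff X j = 0"
  shows "X = pcompose (spoly p X) (monom (1::'a::comm_ring_1) p)"
  by (rule poly_eqI) (simp add: coeff_spoly_comp[OF assms(1)] assms(2))

lemma pderiv0_coeff:
  assumes "pderiv Y = (0 :: 'k::field poly)" "\<not> CHAR('k) dvd j"
  shows "coeff Y j = 0"
proof -
  have j0: "j \<noteq> 0" using assms(2) by (metis dvd_0_right)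
  then obtain i where i: "j = Suc i" by (cases j) auto
  have "0 = coeff (pderiv Y) i" using assms(1) by simp
  also have "\<dots> = of_nat j * coeff Y j" unfolding coeff_pderiv i by simp
  finally show ?thesis using assms(2) of_nat_eq_0_iff_char_dvd[of j, where 'a='k] by auto
qed

lemma Z_decomp:
  assumes "(a :: 'k::field poly) \<noteq> 0"
  shows "\<exists>e w. a = [:0,1:] ^ e * w \<and> poly w 0 \<noteq> 0"
proof -
  obtain w where w: "a = [:0,1:] ^ order 0 a * w" "\<not> [:0,1:] dvd w"
    using order_decomp[OF assms, of 0] by auto
  have "poly w 0 \<noteq> 0" using w(2) poly_eq_0_iff_dvd[of w 0] by simp
  thus ?thesis using w(1) by blast
qed

lemma coeff_Z_decomp: "coeff ([:0,1:] ^ e * w) e = poly (w :: 'k::field poly) 0"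
  by (simp add: Z_power coeff_monom_mult poly_0_coeff_0)



lemma rderiv_zero: "rderiv (0 :: 'k::field ratfun) = 0"
  using rderiv_const0[of "0 :: 'k poly"] by (simp add: fract_collapse)

lemma rderiv_iter_zero: "(rderiv ^^ i) (0 :: 'k::field ratfun) = 0"
  by (induction i) (simp_all add: rderiv_zero)

lemma keyp:
  fixes c :: "nat \<Rightarrow> 'k::{field,finite} ratfun"
  assumes cn: "c n \<noteq> 0" and mom: "MOM_at_zero n c" and sol: "apply_op n c f = 0"
    and f: "f = Fract ([:0,1:] ^ s * a1) ([:0,1:] ^ u * b1)" "poly a1 0 \<noteq> 0" "poly b1 0 \<noteq> 0"
  shows "CHAR('k) dvd s + (CHAR('k) - 1) * u"
proof -
  define p where "p = CHAR('k)"
  have p0: "p > 0" unfolding p_def by (rule finite_imp_CHAR_pos) simp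
  have pc: "of_nat p = (0::'k)" unfolding p_def by simp
  have "pderiv (([:0,1:] :: 'k poly) ^ (p * u)) = 0"
    using pc by (simp add: pderiv_power)
  hence sol2: "apply_op n c (Fract ([:0,1:] ^ (p * u)) 1 * f) = 0"
    by (intro sol_mult[OF rderiv_const0 sol])
  have b10: "b1 \<noteq> 0" using f(3) by auto
  have "Fract ([:0,1:] ^ (p * u)) 1 * f = rz ^ (s + (p - 1) * u) * Fract a1 b1"
  proof -
    have "([:0,1:] :: 'k poly) ^ (p * u) * [:0,1:] ^ s = [:0,1:] ^ (s + (p - 1) * u) * [:0,1:] ^ u"
      unfolding power_add[symmetric] using p0 by (cases p) (auto simp: algebra_simps)
    thus ?thesis unfolding f(1) rz_power using b10
      by (simp add: eq_fract ac_simps)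
  qed
  hence "apply_op n c (rz ^ (s + (p - 1) * u) * Fract a1 b1) = 0" using sol2 by simp
  moreover have "inR (Fract a1 b1)" "reval0 (Fract a1 b1) \<noteq> 0"
    using f(2,3) by (auto simp: inR_Fract reval0_Fract)
  ultimately have "(of_nat (s + (p - 1) * u) :: 'k) = 0" using key[OF cn mom] by blast
  thus ?thesis unfolding p_def of_nat_eq_0_iff_char_dvd .
qed

theorem mainTheorem10:
  fixes c :: "nat \<Rightarrow> ('k::{field,finite}) ratfun" and n p :: nat
  assumes "CHAR('k) = p"
    and "c n \<noteq> 0"
    and "MOM_at_zero n c"
    and "sol_space n c \<noteq> {0}"
  shows "dim_one_over (subfield_zp p) (sol_space n c)"
proof -
  note cn = assms(2) and mom = assms(3)
  have p0: "p > 0" unfolding assms(1)[symmetric] by (rule finite_imp_CHAR_pos) simp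
  have pc: "of_nat p = (0::'k)" unfolding assms(1)[symmetric] by simp
  have pdvd: "(of_nat j = (0::'k)) \<longleftrightarrow> p dvd j" for j
    unfolding assms(1)[symmetric] by (rule of_nat_eq_0_iff_char_dvd)
  have "0 \<in> sol_space n c" by (simp add: sol_space_def apply_op_def rderiv_iter_zero)
  then obtain f0 where f0V: "apply_op n c f0 = 0" and f0nz: "f0 \<noteq> 0"
    using assms(4) unfolding sol_space_def by blast
  obtain a b where f0: "f0 = Fract a b" "b \<noteq> 0" "a \<noteq> 0"
    using f0nz by (cases f0 rule: Fract_cases_nonzero) auto
  obtain s a1 where a: "a = [:0,1:] ^ s * a1" "poly a1 0 \<noteq> 0" using Z_decomp[OF f0(3)] by blast
  obtain u b1 where b: "b = [:0,1:] ^ u * b1" "poly b1 0 \<noteq> 0" using Z_decomp[OF f0(2)] by blast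
  have div0: "p dvd s + (p - 1) * u"
    using keyp[OF cn mom f0V] f0(1) a b assms(1) by blast
  have "\<exists>q\<in>subfield_zp p. g = q * f0" if gV: "apply_op n c g = 0" for g
  proof -
    obtain cc d where gf: "g / f0 = Fract cc d" "d \<noteq> 0" by (cases "g / f0")
    define X where "X = cc * d ^ (p - 1)"
    define Dp where "Dp = d ^ p"
    have Dp0: "Dp \<noteq> 0" using gf(2) by (simp add: Dp_def)
    have pDp: "pderiv Dp = 0" unfolding Dp_def using pc by (simp add: pderiv_power)
    define B where "B = spoly p Dp"
    have DpB: "Dp = pcompose B (monom 1 p)"
      unfolding B_def by (rule spoly_eq[OF p0]) (use pderiv0_coeff[OF pDp] assms(1) in auto)
    define P0 where "P0 = spoly p X"
    define N where "N = X - pcompose P0 (monom 1 p)"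
    have coeffN: "coeff N j = (if p dvd j then 0 else coeff X j)" for j
      unfolding N_def P0_def by (simp add: coeff_spoly_comp[OF p0])
    have "cc * Dp = X * d" unfolding X_def Dp_def using power_minus_mult[OF p0, of d]
      by (simp add: mult.assoc)
    hence gX: "g / f0 = Fract X Dp" unfolding gf(1) using gf(2) Dp0 by (simp add: eq_fract)
    have "g = (g / f0) * f0" using f0nz by simp
    hence g_eq: "g = Fract X Dp * f0" unfolding gX .
    have NV: "apply_op n c (Fract N 1 * f0) = 0"
    proof -
      have h: "Fract Dp 1 * Fract X Dp = Fract X 1" using Dp0 by (simp add: eq_fract)
      have h2: "Fract Dp 1 * g = Fract X 1 * f0"
        using h by (subst g_eq) (simp only: mult.assoc[symmetric])
      have "Fract N 1 * f0 = Fract Dp 1 * g - Fract (pcompose P0 (monom 1 p)) 1 * f0"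
        unfolding N_def Fract_diff1 by (simp only: left_diff_distrib h2)
      moreover have "apply_op n c (Fract Dp 1 * g) = 0"
        by (rule sol_mult[OF rderiv_const0[OF pDp] gV])
      moreover have "apply_op n c (Fract (pcompose P0 (monom 1 p)) 1 * f0) = 0"
        by (rule sol_mult[OF rderiv_const0[OF pderiv_pcompose_char[OF pc]] f0V])
      ultimately show ?thesis using sol_diff by metis
    qed
    have N0: "N = 0"
    proof (rule ccontr)
      assume "N \<noteq> 0"
      then obtain t N1 where N1: "N = [:0,1:] ^ t * N1" "poly N1 0 \<noteq> 0" using Z_decomp by blast
      have "coeff N t \<noteq> 0" using N1 coeff_Z_decomp by metis
      hence ndvd: "\<not> p dvd t" using coeffN by auto
      have "Fract N 1 * f0 = Fract ([:0,1:] ^ (t + s) * (N1 * a1)) ([:0,1:] ^ u * b1)"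
        unfolding N1(1) f0(1) a(1) b(1) by (simp add: power_add ac_simps)
      moreover have "poly (N1 * a1) 0 \<noteq> 0" using N1(2) a(2) by simp
      ultimately have "p dvd (t + s) + (p - 1) * u"
        using keyp[OF cn mom NV] b(2) assms(1) by blast
      hence "p dvd t + (s + (p - 1) * u)" by (simp add: add.assoc)
      thus False using div0 ndvd by (simp add: dvd_add_left_iff)
    qed
    hence "X = pcompose P0 (monom 1 p)" unfolding N_def by simp
    hence "g = Fract (pcompose P0 (monom 1 p)) (pcompose B (monom 1 p)) * f0"
      using g_eq DpB by simp
    moreover have "Fract (pcompose P0 (monom 1 p)) (pcompose B (monom 1 p)) \<in> subfield_zp p"
      unfolding subfield_zp_def by blast
    ultimately show ?thesis by blast
  qed
  thus ?thesis unfolding dim_one_over_def sol_space_def using f0V f0nz by blast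
qed

end
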